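(* Let $n\ge 4$, $x_1,\dots,x_{n-1}>0$, $\gamma,\delta>0$ with $\gamma\ne1$, $\delta\ne1$, and set $x_0=1$. Let $\mathbf{R}=[r_{ij}]\in\mathbb{R}^{n\times n}$ be given by $r_{ij}=x_{j-1}/x_{i-1}$ for all $i,j$, except $r_{12}=\delta x_1$, $r_{21}=1/(\delta x_1)$, $r_{34}=\gamma x_3/x_2$, $r_{43}=x_2/(\gamma x_3)$. Then the characteristic polynomial of $\mathbf{R}$ is $$p_{\mathbf{R}}(\lambda)=\det(\mathbf{R}-\lambda\mathbf{I})=(-1)^n\lambda^{n-5}\left(\lambda^5-n\lambda^4-(n-2)\left(\gamma+\delta+\frac1\gamma+\frac1\delta-4\right)\lambda^2-c\lambda-(n-4)c\right),\quad c=\frac{(\gamma-1)^2(\delta-1)^2}{\gamma\delta}.$$ In particular, for $n=4$ (where $\mathbf{R}$ is the $4\times4$ matrix $\mathbf{Q}$ with these entries), $$p_{\mathbf{Q}}(\lambda)=\lambda^4-4\lambda^3-2\left(\gamma+\delta+\frac1\gamma+\frac1\delta-4\right)\lambda-\frac{(\gamma-1)^2(\delta-1)^2}{\gamma\delta}.$$ *)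

theory Defs
  imports "Jordan_Normal_Form.Determinant"
begin

text \<open>The n x n matrix R of the paper, with 0-based indices (paper index i corresponds
  to i-1 here).  The parameter x gives x_1,...,x_{n-1}; the value x 0 is overridden by
  the convention x_0 = 1.  Entry (i,j) is x_j / x_i except at the four special positions.\<close>

definition xx :: "(nat \<Rightarrow> real) \<Rightarrow> nat \<Rightarrow> real" where
  "xx x k = (if k = 0 then 1 else x k)"

definition R_mat :: "nat \<Rightarrow> (nat \<Rightarrow> real) \<Rightarrow> real \<Rightarrow> real \<Rightarrow> real mat" where
  "R_mat n x \<gamma> \<delta> = mat n n (\<lambda>(i, j).
     if (i, j) = (0, 1) then \<delta> * x 1
     else if (i, j) = (1, 0) then 1 / (\<delta> * x 1)
     else if (i, j) = (2, 3) then \<gamma> * x 3 / x 2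
     else if (i, j) = (3, 2) then x 2 / (\<gamma> * x 3)
     else xx x j / xx x i)"

end

theory Submission imports Defs begin

lemma det_mat_Suc:
  "det (mat (Suc n) (Suc n) f) = (\<Sum>j<Suc n. f (0,j) * (-1)^j *
      det (mat n n (\<lambda>(i',j'). f (Suc i', if j' < j then j' else Suc j'))))"
proof -
  have A: "mat (Suc n) (Suc n) f \<in> carrier_mat (Suc n) (Suc n)" by simp
  have "det (mat (Suc n) (Suc n) f) = (\<Sum>j<Suc n. mat (Suc n) (Suc n) f $$ (0,j) * cofactor (mat (Suc n) (Suc n) f) 0 j)"
    by (rule laplace_expansion_row[OF A]) simp
  also have "\<dots> = (\<Sum>j<Suc n. f (0,j) * (-1)^j *
      det (mat n n (\<lambda>(i',j'). f (Suc i', if j' < j then j' else Suc j'))))"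
  proof (rule sum.cong[OF refl])
    fix j assume j: "j \<in> {..<Suc n}"
    have "mat_delete (mat (Suc n) (Suc n) f) 0 j =
          mat n n (\<lambda>(i',j'). f (Suc i', if j' < j then j' else Suc j'))"
      by (rule eq_matI) (auto simp: mat_delete_def)
    then show "mat (Suc n) (Suc n) f $$ (0, j) * cofactor (mat (Suc n) (Suc n) f) 0 j =
      f (0, j) * (- 1) ^ j * det (mat n n (\<lambda>(i', j'). f (Suc i', if j' < j then j' else Suc j')))"
      using j by (simp add: cofactor_def)
  qed
  finally show ?thesis .
qed

lemma det_mat_0: "det (mat 0 0 f) = 1" by (rule det_dim_zero) simp

lemma det_last_row:
  assumes A: "A \<in> carrier_mat (Suc k) (Suc k)" and z: "\<And>j. j < k \<Longrightarrow> A $$ (k,j) = 0"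
  shows "det A = A $$ (k,k) * det (mat k k (\<lambda>(i,j). A $$ (i,j)))"
proof -
  have "det A = (\<Sum>j<Suc k. A $$ (k,j) * cofactor A k j)"
    by (rule laplace_expansion_row[OF A]) simp
  also have "\<dots> = A $$ (k,k) * cofactor A k k" using z by simp
  also have "mat_delete A k k = mat k k (\<lambda>(i,j). A $$ (i,j))"
    by (rule eq_matI) (use A in \<open>auto simp: mat_delete_def\<close>)
  hence "cofactor A k k = det (mat k k (\<lambda>(i,j). A $$ (i,j)))"
    by (simp add: cofactor_def)
  finally show ?thesis .
qed

lemma det_last_col:
  assumes A: "A \<in> carrier_mat (Suc k) (Suc k)" and z: "\<And>i. i < k \<Longrightarrow> A $$ (i,k) = 0"
  shows "det A = A $$ (k,k) * det (mat k k (\<lambda>(i,j). A $$ (i,j)))"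
proof -
  have "det A = (\<Sum>i<Suc k. A $$ (i,k) * cofactor A i k)"
    by (rule laplace_expansion_column[OF A]) simp
  also have "\<dots> = A $$ (k,k) * cofactor A k k" using z by simp
  also have "mat_delete A k k = mat k k (\<lambda>(i,j). A $$ (i,j))"
    by (rule eq_matI) (use A in \<open>auto simp: mat_delete_def\<close>)
  hence "cofactor A k k = det (mat k k (\<lambda>(i,j). A $$ (i,j)))"
    by (simp add: cofactor_def)
  finally show ?thesis .
qed

lemma det_last_row_add:
  assumes A: "A \<in> carrier_mat (Suc k) (Suc k)" and B: "B \<in> carrier_mat (Suc k) (Suc k)"
    and C: "C \<in> carrier_mat (Suc k) (Suc k)"
    and eqA: "\<And>i j. i < k \<Longrightarrow> j < Suc k \<Longrightarrow> A $$ (i,j) = C $$ (i,j)"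
    and eqB: "\<And>i j. i < k \<Longrightarrow> j < Suc k \<Longrightarrow> B $$ (i,j) = C $$ (i,j)"
    and last: "\<And>j. j < Suc k \<Longrightarrow> C $$ (k,j) = A $$ (k,j) + B $$ (k,j)"
  shows "(det C :: 'a :: comm_ring_1) = det A + det B"
proof -
  have cA: "cofactor A k j = cofactor C k j" and cB: "cofactor B k j = cofactor C k j" if j: "j < Suc k" for j
  proof -
    have "mat_delete A k j = mat_delete C k j"
      by (rule eq_matI) (use A C j eqA in \<open>auto simp: mat_delete_def\<close>)
    thus "cofactor A k j = cofactor C k j" by (simp add: cofactor_def)
    have "mat_delete B k j = mat_delete C k j"
      by (rule eq_matI) (use B C j eqB in \<open>auto simp: mat_delete_def\<close>)
    thus "cofactor B k j = cofactor C k j" by (simp add: cofactor_def)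
  qed
  have "det C = (\<Sum>j<Suc k. C $$ (k,j) * cofactor C k j)"
    by (rule laplace_expansion_row[OF C]) simp
  also have "\<dots> = (\<Sum>j<Suc k. A $$ (k,j) * cofactor A k j) + (\<Sum>j<Suc k. B $$ (k,j) * cofactor B k j)"
    by (simp add: sum.distrib[symmetric] last cA cB distrib_right)
  also have "\<dots> = det A + det B"
    using laplace_expansion_row[OF A, of k] laplace_expansion_row[OF B, of k] by simp
  finally show ?thesis .
qed

lemma det_scale:
  assumes A: "A \<in> carrier_mat n n" and B: "B \<in> carrier_mat n n"
    and a: "\<And>i. i < n \<Longrightarrow> (a i :: 'a :: field) \<noteq> 0"
    and e: "\<And>i j. i < n \<Longrightarrow> j < n \<Longrightarrow> B $$ (i,j) = A $$ (i,j) * a j / a i"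
  shows "det B = det A"
  unfolding det_def'[OF A] det_def'[OF B]
proof (rule sum.cong[OF refl])
  fix p assume "p \<in> {p. p permutes {0..<n}}"
  hence p: "p permutes {0..<n}" by simp
  have pi: "i < n \<Longrightarrow> p i < n" for i using p by (simp add: permutes_in_image)
  have "(\<Prod>i = 0..<n. B $$ (i, p i)) = (\<Prod>i = 0..<n. A $$ (i, p i)) * ((\<Prod>i = 0..<n. a (p i)) / (\<Prod>i = 0..<n. a i))"
    by (simp add: e pi prod.distrib prod_dividef)
  also have "(\<Prod>i = 0..<n. a (p i)) = (\<Prod>i = 0..<n. a i)"
    using prod.permute[OF p, of a] by (simp add: comp_def)
  also have "(\<Prod>i = 0..<n. a i) \<noteq> 0" using a by (simp add: prod_zero_iff)
  hence "(\<Prod>i = 0..<n. a i) / (\<Prod>i = 0..<n. a i) = 1" by simp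
  finally show "signof p * (\<Prod>i = 0..<n. B $$ (i, p i)) = signof p * (\<Prod>i = 0..<n. A $$ (i, p i))" by simp
qed


definition me :: "real \<Rightarrow> real \<Rightarrow> nat \<Rightarrow> nat \<Rightarrow> real" where
  "me g d i j = (if (i,j) = (0,1) then d else if (i,j) = (1,0) then 1/d
     else if (i,j) = (2,3) then g else if (i,j) = (3,2) then 1/g else 1)"

definition Mt :: "real \<Rightarrow> real \<Rightarrow> nat \<Rightarrow> real \<Rightarrow> real mat" where
  "Mt g d N t = mat N N (\<lambda>(i,j). me g d i j - (if i = j then t else 0))"

definition Et :: "real \<Rightarrow> real \<Rightarrow> nat \<Rightarrow> real \<Rightarrow> real mat" where
  "Et g d N t = mat N N (\<lambda>(i,j). me g d i j - 1 - (if i = j then t else 0))"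

lemma me_big: "4 \<le> i \<or> 4 \<le> j \<Longrightarrow> me g d i j = 1"
  by (auto simp: me_def)

lemma Et_rec: assumes k: "4 \<le> k" shows "det (Et g d (Suc k) t) = - t * det (Et g d k t)"
proof -
  have "det (Et g d (Suc k) t) = Et g d (Suc k) t $$ (k,k) * det (mat k k (\<lambda>(i,j). Et g d (Suc k) t $$ (i,j)))"
    by (rule det_last_row) (use k in \<open>auto simp: Et_def me_big\<close>)
  also have "mat k k (\<lambda>(i,j). Et g d (Suc k) t $$ (i,j)) = Et g d k t"
    by (rule eq_matI) (auto simp: Et_def)
  finally show ?thesis using k by (simp add: Et_def me_big)
qed

lemma Et_closed: "det (Et g d (4 + m) t) = (- t) ^ m * det (Et g d 4 t)"
proof (induction m)
  case (Suc m) thus ?case using Et_rec[of "4 + m" g d t] by simp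
qed simp

lemma Mt_rec: assumes k: "4 \<le> k"
  shows "det (Mt g d (Suc k) t) = - t * det (Mt g d k t) + det (Et g d k t)"
proof -
  define X where "X = mat (Suc k) (Suc k) (\<lambda>(i,j). if i = k then 1 else me g d i j - (if i = j then t else 0))"
  define B where "B = mat (Suc k) (Suc k) (\<lambda>(i,j). if i = k then (if j = k then - t else 0) else me g d i j - (if i = j then t else 0))"
  define U where "U = mat (Suc k) (Suc k) (\<lambda>(i,j). if i = j \<or> j = k then 1 else (0::real))"
  define Z where "Z = mat (Suc k) (Suc k) (\<lambda>(i,j). if i = k then 1 else if j = k then 0 else me g d i j - 1 - (if i = j then t else 0))"
  have "det (Mt g d (Suc k) t) = det X + det B"
    by (rule det_last_row_add) (use k in \<open>auto simp: X_def B_def Mt_def me_big\<close>)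
  moreover have "det B = - t * det (Mt g d k t)"
  proof -
    have "det B = B $$ (k,k) * det (mat k k (\<lambda>(i,j). B $$ (i,j)))"
      by (rule det_last_row) (auto simp: B_def)
    also have "mat k k (\<lambda>(i,j). B $$ (i,j)) = Mt g d k t"
      by (rule eq_matI) (auto simp: B_def Mt_def)
    finally show ?thesis by (simp add: B_def)
  qed
  moreover have "det X = det (Et g d k t)"
  proof -
    have XUZ: "X = U * Z"
    proof (rule eq_matI)
      fix i j assume i: "i < dim_row (U * Z)" and j: "j < dim_col (U * Z)"
      hence i: "i < Suc k" and j: "j < Suc k" by (auto simp: U_def Z_def)
      have "(U * Z) $$ (i,j) = (\<Sum>l<Suc k. U $$ (i,l) * Z $$ (l,j))"
        using i j by (simp add: U_def Z_def scalar_prod_def lessThan_atLeast0)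
      also have "\<dots> = (\<Sum>l<Suc k. (if l = i then Z $$ (l,j) else 0) + (if l = k \<and> i \<noteq> k then Z $$ (l,j) else 0))"
        by (rule sum.cong[OF refl]) (use i in \<open>auto simp: U_def\<close>)
      also have "\<dots> = Z $$ (i,j) + (if i \<noteq> k then Z $$ (k,j) else 0)"
        using i by (simp add: sum.distrib)
      also have "\<dots> = X $$ (i,j)"
        using i j k by (auto simp: X_def Z_def me_big)
      finally show "X $$ (i,j) = (U * Z) $$ (i,j)" by simp
    qed (auto simp: X_def U_def Z_def)
    have dU: "det U = 1"
    proof -
      have "det U = U $$ (k,k) * det (mat k k (\<lambda>(i,j). U $$ (i,j)))"
        by (rule det_last_row) (auto simp: U_def)
      also have "mat k k (\<lambda>(i,j). U $$ (i,j)) = 1\<^sub>m k"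
        by (rule eq_matI) (auto simp: U_def)
      finally show ?thesis by (simp add: U_def)
    qed
    have dZ: "det Z = det (Et g d k t)"
    proof -
      have "det Z = Z $$ (k,k) * det (mat k k (\<lambda>(i,j). Z $$ (i,j)))"
        by (rule det_last_col) (auto simp: Z_def)
      also have "mat k k (\<lambda>(i,j). Z $$ (i,j)) = Et g d k t"
        by (rule eq_matI) (auto simp: Z_def Et_def)
      finally show ?thesis by (simp add: Z_def)
    qed
    have "det X = det U * det Z" unfolding XUZ
      by (rule det_mult[of _ "Suc k"]) (auto simp: U_def Z_def)
    thus ?thesis using dU dZ by simp
  qed
  ultimately show ?thesis by simp
qed

lemma Mt_closed: "det (Mt g d (4 + m) t) = (- t) ^ m * det (Mt g d 4 t) + real m * (- t) ^ (m - 1) * det (Et g d 4 t)"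
proof (induction m)
  case 0 then show ?case by simp
next
  case (Suc m)
  have "det (Mt g d (4 + Suc m) t) = - t * det (Mt g d (4 + m) t) + det (Et g d (4 + m) t)"
    using Mt_rec[of "4 + m" g d t] by simp
  also have "\<dots> = (- t) ^ Suc m * det (Mt g d 4 t) + real (Suc m) * (- t) ^ (Suc m - 1) * det (Et g d 4 t)"
    unfolding Suc Et_closed by (cases m) (simp_all add: algebra_simps)
  finally show ?case .
qed


lemma four: "(4::nat) = Suc (Suc (Suc (Suc 0)))" by simp

lemma Et4: assumes "g \<noteq> 0" "d \<noteq> 0"
  shows "det (Et g d 4 t) = (t^2 + (d - 1)^2 / d) * (t^2 + (g - 1)^2 / g)"
  unfolding Et_def four
  using assms by (simp add: det_mat_Suc det_mat_0 me_def lessThan_Suc field_simps) (simp add: algebra_simps power2_eq_square eval_nat_numeral)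

lemma Mt4: assumes "g \<noteq> 0" "d \<noteq> 0"
  shows "det (Mt g d 4 t) = t^4 - 4 * t^3 - 2 * (g + d + 1/g + 1/d - 4) * t - (g - 1)^2 * (d - 1)^2 / (g * d)"
  unfolding Mt_def four
  using assms by (simp add: det_mat_Suc det_mat_0 me_def lessThan_Suc field_simps) (simp add: algebra_simps power2_eq_square eval_nat_numeral)

lemma alg0:
  fixes t S c P r :: real
  shows "(- t * P) * (t^4 - 4 * t^3 - 2 * S * t - c)
     + (1 + r) * P * (t^4 + S * t^2 + c)
   = - P * (t^5 - (r + 5) * t^4 - (r + 5 - 2) * S * t^2 - c * t - (r + 5 - 4) * c)"
  by (simp add: power_numeral_reduce algebra_simps)
lemma alg:
  fixes t S c :: real
  shows "(- t) ^ Suc k * (t^4 - 4 * t^3 - 2 * S * t - c)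
     + real (Suc k) * (- t) ^ k * (t^4 + S * t^2 + c)
   = (-1)^Suc k * t^k * (t^5 - (real k + 5) * t^4
              - (real k + 5 - 2) * S * t^2
              - c * t - (real k + 5 - 4) * c)"
proof -
  have b: "(- t) ^ k = ((-1)^k * t^k)" by (rule power_minus)
  have a: "(- t) ^ Suc k = - t * ((-1)^k * t^k)" unfolding b[symmetric] by simp
  have c: "(-1::real)^Suc k * t^k = - ((-1)^k * t^k)" by simp
  show ?thesis unfolding a b c of_nat_Suc by (rule alg0)
qed
lemma D4:
  fixes g d t :: real assumes g0: "g \<noteq> 0" and d0: "d \<noteq> 0"
  shows "(t^2 + (d - 1)^2 / d) * (t^2 + (g - 1)^2 / g) = t^4 + (g + d + 1/g + 1/d - 4) * t^2 + (g - 1)^2 * (d - 1)^2 / (g * d)"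
proof -
  have 1: "(d - 1)^2 / d = d - 2 + 1/d" using d0 by (simp add: field_simps power2_eq_square)
  have 2: "(g - 1)^2 / g = g - 2 + 1/g" using g0 by (simp add: field_simps power2_eq_square)
  have 3: "(g - 1)^2 * (d - 1)^2 / (g * d) = (g - 2 + 1/g) * (d - 2 + 1/d)"
    unfolding 1[symmetric] 2[symmetric] by simp
  show ?thesis unfolding 1 2 3 by (simp add: power_numeral_reduce algebra_simps)
qed

theorem theorem4:
  fixes n :: nat and x :: "nat \<Rightarrow> real" and \<gamma> \<delta> :: real
  assumes "n \<ge> 4"
    and "\<And>i. 1 \<le> i \<Longrightarrow> i \<le> n - 1 \<Longrightarrow> x i > 0"
    and "\<gamma> > 0" and "\<delta> > 0" and "\<gamma> \<noteq> 1" and "\<delta> \<noteq> 1"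
  defines "c \<equiv> (\<gamma> - 1)^2 * (\<delta> - 1)^2 / (\<gamma> * \<delta>)"
  shows "(5 \<le> n \<longrightarrow> (\<forall>t::real.
           det (R_mat n x \<gamma> \<delta> - t \<cdot>\<^sub>m 1\<^sub>m n) =
           (-1)^n * t^(n - 5) * (t^5 - real n * t^4
              - (real n - 2) * (\<gamma> + \<delta> + 1/\<gamma> + 1/\<delta> - 4) * t^2
              - c * t - (real n - 4) * c)))
       \<and> (n = 4 \<longrightarrow> (\<forall>t::real.
           det (R_mat n x \<gamma> \<delta> - t \<cdot>\<^sub>m 1\<^sub>m n) =
           t^4 - 4 * t^3 - 2 * (\<gamma> + \<delta> + 1/\<gamma> + 1/\<delta> - 4) * t - c))"
  proof -
  have g0: "\<gamma> \<noteq> 0" and d0: "\<delta> \<noteq> 0" using assms(3,4) by auto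
  have x1: "x 1 \<noteq> 0" and x2: "x 2 \<noteq> 0" and x3: "x 3 \<noteq> 0"
  proof -
    have "x 1 > 0" "x 2 > 0" "x 3 > 0" by (rule assms(2); use assms(1) in simp)+
    thus "x 1 \<noteq> 0" "x 2 \<noteq> 0" "x 3 \<noteq> 0" by auto
  qed
  have xnz: "xx x i \<noteq> 0" if "i < n" for i
  proof (cases "i = 0")
    case False
    have "x i > 0" by (rule assms(2)) (use that False in auto)
    thus ?thesis using False by (simp add: xx_def)
  qed (simp add: xx_def)
  have key: "det (R_mat n x \<gamma> \<delta> - t \<cdot>\<^sub>m 1\<^sub>m n) = det (Mt \<gamma> \<delta> n t)" for t
  proof (rule det_scale[where a = "xx x"])
    show "Mt \<gamma> \<delta> n t \<in> carrier_mat n n" by (simp add: Mt_def)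
    show "R_mat n x \<gamma> \<delta> - t \<cdot>\<^sub>m 1\<^sub>m n \<in> carrier_mat n n" by (rule minus_carrier_mat) simp
    show "xx x i \<noteq> 0" if "i < n" for i
      using xnz that by blast
    show "(R_mat n x \<gamma> \<delta> - t \<cdot>\<^sub>m 1\<^sub>m n) $$ (i, j) = Mt \<gamma> \<delta> n t $$ (i, j) * xx x j / xx x i"
      if i: "i < n" and j: "j < n" for i j
    proof -
      have xi: "xx x i \<noteq> 0" using xnz i by blast
      have L: "(R_mat n x \<gamma> \<delta> - t \<cdot>\<^sub>m 1\<^sub>m n) $$ (i, j) = R_mat n x \<gamma> \<delta> $$ (i,j) - (if i = j then t else 0)"
        using i j by (simp add: R_mat_def)
      have Rr: "Mt \<gamma> \<delta> n t $$ (i, j) = me \<gamma> \<delta> i j - (if i = j then t else 0)"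
        using i j by (simp add: Mt_def)
      have Rij: "R_mat n x \<gamma> \<delta> $$ (i,j) = (if (i, j) = (0, 1) then \<delta> * x 1
     else if (i, j) = (1, 0) then 1 / (\<delta> * x 1)
     else if (i, j) = (2, 3) then \<gamma> * x 3 / x 2
     else if (i, j) = (3, 2) then x 2 / (\<gamma> * x 3)
     else xx x j / xx x i)" using i j by (simp add: R_mat_def)
      have G: "(if (i, j) = (0, 1) then \<delta> * x 1
     else if (i, j) = (1, 0) then 1 / (\<delta> * x 1)
     else if (i, j) = (2, 3) then \<gamma> * x 3 / x 2
     else if (i, j) = (3, 2) then x 2 / (\<gamma> * x 3)
     else xx x j / xx x i) - (if i = j then t else 0) = (me \<gamma> \<delta> i j - (if i = j then t else 0)) * xx x j / xx x i"
      proof (cases "(i, j) = (0, 1) \<or> (i, j) = (1, 0) \<or> (i, j) = (2, 3) \<or> (i, j) = (3, 2)")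
        case True
        then consider "i = 0 \<and> j = 1" | "i = 1 \<and> j = 0" | "i = 2 \<and> j = 3" | "i = 3 \<and> j = 2" by auto
        then show ?thesis
        proof cases
          case 1 thus ?thesis by (simp add: me_def xx_def)
        next
          case 2 thus ?thesis using x1 d0 by (simp add: me_def xx_def)
        next
          case 3 thus ?thesis using x2 by (simp add: me_def xx_def)
        next
          case 4 thus ?thesis using x3 g0 by (simp add: me_def xx_def)
        qed
      next
        case False
        hence me1: "me \<gamma> \<delta> i j = 1" by (auto simp: me_def)
        show ?thesis using False xi unfolding me1 by (auto simp: field_simps)
      qed
      show ?thesis unfolding L Rr Rij G ..
    qed
  qed
  obtain m where n: "n = 4 + m" using assms(1) le_Suc_ex by blast
  have main: "det (R_mat n x \<gamma> \<delta> - t \<cdot>\<^sub>m 1\<^sub>m n) = (- t) ^ m * (t^4 - 4 * t^3 - 2 * (\<gamma> + \<delta> + 1/\<gamma> + 1/\<delta> - 4) * t - c)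
     + real m * (- t) ^ (m - 1) * ((t^2 + (\<delta> - 1)^2 / \<delta>) * (t^2 + (\<gamma> - 1)^2 / \<gamma>))" for t
    unfolding key by (simp add: n Mt_closed Mt4[OF g0 d0] Et4[OF g0 d0] c_def)
  show ?thesis
  proof (intro conjI impI allI)
    fix t assume "n = 4" thus "det (R_mat n x \<gamma> \<delta> - t \<cdot>\<^sub>m 1\<^sub>m n) =
           t^4 - 4 * t^3 - 2 * (\<gamma> + \<delta> + 1/\<gamma> + 1/\<delta> - 4) * t - c"
      using main[of t] n by simp
  next
    fix t assume "5 \<le> n"
    then obtain k where m: "m = Suc k" using n by (cases m) auto
    have e: "(-1::real)^n = (-1)^Suc k" using n m by (simp add: power_add)
    have nk: "n - 5 = k" using n m by simp
    have rn: "real n = real k + 5" using n m by simp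
    have "det (R_mat n x \<gamma> \<delta> - t \<cdot>\<^sub>m 1\<^sub>m n) =
       (- t) ^ Suc k * (t^4 - 4 * t^3 - 2 * (\<gamma> + \<delta> + 1/\<gamma> + 1/\<delta> - 4) * t - c)
     + real (Suc k) * (- t) ^ k * (t^4 + (\<gamma> + \<delta> + 1/\<gamma> + 1/\<delta> - 4) * t^2 + c)"
      using main[of t] unfolding m D4[OF g0 d0, of t, folded c_def] by simp
    also have "\<dots> = (-1)^Suc k * t^k * (t^5 - (real k + 5) * t^4
              - (real k + 5 - 2) * (\<gamma> + \<delta> + 1/\<gamma> + 1/\<delta> - 4) * t^2
              - c * t - (real k + 5 - 4) * c)" by (rule alg)
    finally show "det (R_mat n x \<gamma> \<delta> - t \<cdot>\<^sub>m 1\<^sub>m n) =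
           (-1)^n * t^(n - 5) * (t^5 - real n * t^4
              - (real n - 2) * (\<gamma> + \<delta> + 1/\<gamma> + 1/\<delta> - 4) * t^2
              - c * t - (real n - 4) * c)"
      unfolding e nk rn .
  qed
qed

end
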